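(* For every $\lambda\ge 0$, consider the signed variant of xOrder, in which $\widehat G$ is replaced by $\widehat G^{s}(q)=\frac{k_{a,b}}{k}A(q)+\frac{k_{b,a}}{k}B(q)-\lambda\,(A(q)-B(q))$ and the dynamic programming is otherwise unchanged. Its output $O(n^a,n^b)$ is a global maximizer, over all cross-group orderings $o$ of $(\mathrm{p}^a,\mathrm{p}^b)$, of $$J^{s}(o)=\mathrm{AUC}^o-\lambda\big(\mathrm{xAUC}^o(a,b)-\mathrm{xAUC}^o(b,a)\big).$$
   Context: Setting: two disjoint finite groups $a,b$ of instances with labels $Y_u\in\{0,1\}$; $n^g,n^g_1,n^g_0$ denote size, positives and negatives of group $g$ (all $\ge1$); $n_1=n_1^a+n_1^b$, $n_0=n_0^a+n_0^b$, $k_{a,b}=n_1^an_0^b$, $k_{b,a}=n_0^an_1^b$, $k=n_0n_1$. $\mathrm{p}^a=(\mathrm{p}^{a(1)},\dots,\mathrm{p}^{a(n^a)})$, $\mathrm{p}^b=(\mathrm{p}^{b(1)},\dots,\mathrm{p}^{b(n^b)})$ are fixed orderings of the groups. A cross-group ordering is a list of all instances of $a\cup b$ preserving the relative orders within $\mathrm{p}^a$ and within $\mathrm{p}^b$; "precedes" means ranked higher. $\mathrm{AUC}^o=\frac{1}{n_1n_0}\#\{(u,v):Y_u=1,Y_v=0,u\text{ precedes }v\text{ in }o\}$; $\mathrm{xAUC}^o(a,b)=\frac{1}{n_1^an_0^b}\#\{(u,v):u\in a,Y_u=1,v\in b,Y_v=0,u\text{ precedes }v\}$, $\mathrm{xAUC}^o(b,a)$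 symmetrically. For $0\le i\le n^a$, $0\le j\le n^b$ and a list $q$ interleaving $\mathrm{p}^{a(1)},\dots,\mathrm{p}^{a(i)}$ and $\mathrm{p}^{b(1)},\dots,\mathrm{p}^{b(j)}$ with within-group orders preserved, let $q^{\to b}$ be $q$ followed by $\mathrm{p}^{b(j+1)},\dots,\mathrm{p}^{b(n^b)}$ and $q^{\to a}$ be $q$ followed by $\mathrm{p}^{a(i+1)},\dots,\mathrm{p}^{a(n^a)}$; $A(q)=\frac{1}{n_1^an_0^b}\#\{(u,v): u\in\{\mathrm{p}^{a(1)},..,\mathrm{p}^{a(i)}\},Y_u=1,v\in b,Y_v=0,u\text{ precedes }v\text{ in }q^{\to b}\}$, $B(q)=\frac{1}{n_1^bn_0^a}\#\{(u,v): u\in\{\mathrm{p}^{b(1)},..,\mathrm{p}^{b(j)}\},Y_u=1,v\in a,Y_v=0,u\text{ precedes }v\text{ in }q^{\to a}\}$. Dynamic programming: $O(i,0)=(\mathrm{p}^{a(1)},\dots,\mathrm{p}^{a(i)})$, $O(0,j)=(\mathrm{p}^{b(1)},\dots,\mathrm{p}^{b(j)})$; for $i=1,\dots,n^a$, $j=1,\dots,n^b$ in increasing order, $O(i,j)=O(i-1,j)\oplus\mathrm{p}^{a(i)}$ if $\widehat G^s(O(i-1,j)\oplus\mathrm{p}^{a(i)})>\widehat G^s(O(i,j-1)\oplus\mathrm{p}^{b(j)})$, and $O(i,j)=O(i,j-1)\oplus\mathrm{p}^{b(j)}$ otherwise ($\oplus$ appends an element to the end of a list). *)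

theory Defs
  imports Main "HOL.Real"
begin

text \<open>Instances have an abstract type 'x; the label Y u = True means Y_u = 1.
  Groups are given by their fixed orderings pa, pb (distinct, disjoint lists).\<close>

definition precedes :: "'x list \<Rightarrow> 'x \<Rightarrow> 'x \<Rightarrow> bool" where
  "precedes r u v \<longleftrightarrow> (\<exists>i j. i < j \<and> j < length r \<and> r ! i = u \<and> r ! j = v)"

definition npos :: "('x \<Rightarrow> bool) \<Rightarrow> 'x list \<Rightarrow> real" where
  "npos Y p = real (card {u \<in> set p. Y u})"

definition nneg :: "('x \<Rightarrow> bool) \<Rightarrow> 'x list \<Rightarrow> real" where
  "nneg Y p = real (card {u \<in> set p. \<not> Y u})"

definition cnt :: "('x \<Rightarrow> bool) \<Rightarrow> 'x set \<Rightarrow> 'x set \<Rightarrow> 'x list \<Rightarrow> real" where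
  "cnt Y S T r = real (card {(u, v). u \<in> S \<and> Y u \<and> v \<in> T \<and> \<not> Y v \<and> precedes r u v})"

definition AUC :: "('x \<Rightarrow> bool) \<Rightarrow> 'x list \<Rightarrow> 'x list \<Rightarrow> 'x list \<Rightarrow> real" where
  "AUC Y pa pb r =
     cnt Y (set pa \<union> set pb) (set pa \<union> set pb) r
       / ((npos Y pa + npos Y pb) * (nneg Y pa + nneg Y pb))"

definition xAUC :: "('x \<Rightarrow> bool) \<Rightarrow> 'x list \<Rightarrow> 'x list \<Rightarrow> 'x list \<Rightarrow> real" where
  "xAUC Y pg ph r = cnt Y (set pg) (set ph) r / (npos Y pg * nneg Y ph)"

definition Jsig :: "real \<Rightarrow> ('x \<Rightarrow> bool) \<Rightarrow> 'x list \<Rightarrow> 'x list \<Rightarrow> 'x list \<Rightarrow> real" where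
  "Jsig lam Y pa pb r = AUC Y pa pb r - lam * (xAUC Y pa pb r - xAUC Y pb pa r)"

text \<open>A(q) and B(q) for a partial interleaving q of the first i elements of pa and
  the first j elements of pb.\<close>
definition Aq :: "('x \<Rightarrow> bool) \<Rightarrow> 'x list \<Rightarrow> 'x list \<Rightarrow> nat \<Rightarrow> nat \<Rightarrow> 'x list \<Rightarrow> real" where
  "Aq Y pa pb i j q =
     cnt Y (set (take i pa)) (set pb) (q @ drop j pb) / (npos Y pa * nneg Y pb)"

definition Bq :: "('x \<Rightarrow> bool) \<Rightarrow> 'x list \<Rightarrow> 'x list \<Rightarrow> nat \<Rightarrow> nat \<Rightarrow> 'x list \<Rightarrow> real" where
  "Bq Y pa pb i j q =
     cnt Y (set (take j pb)) (set pa) (q @ drop i pa) / (npos Y pb * nneg Y pa)"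

definition Gs :: "real \<Rightarrow> ('x \<Rightarrow> bool) \<Rightarrow> 'x list \<Rightarrow> 'x list \<Rightarrow> nat \<Rightarrow> nat \<Rightarrow> 'x list \<Rightarrow> real" where
  "Gs lam Y pa pb i j q =
     (let kab = npos Y pa * nneg Y pb;
          kba = nneg Y pa * npos Y pb;
          k = (nneg Y pa + nneg Y pb) * (npos Y pa + npos Y pb);
          A = Aq Y pa pb i j q;
          B = Bq Y pa pb i j q
      in kab / k * A + kba / k * B - lam * (A - B))"

text \<open>The dynamic programme; ODP i j is O(i,j). Note pa ! i is p^{a(i+1)} (0-based).\<close>
fun ODP :: "real \<Rightarrow> ('x \<Rightarrow> bool) \<Rightarrow> 'x list \<Rightarrow> 'x list \<Rightarrow> nat \<Rightarrow> nat \<Rightarrow> 'x list" where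
  "ODP lam Y pa pb 0 j = take j pb"
| "ODP lam Y pa pb (Suc i) 0 = take (Suc i) pa"
| "ODP lam Y pa pb (Suc i) (Suc j) =
     (let c1 = ODP lam Y pa pb i (Suc j) @ [pa ! i];
          c2 = ODP lam Y pa pb (Suc i) j @ [pb ! j]
      in if Gs lam Y pa pb (Suc i) (Suc j) c1 > Gs lam Y pa pb (Suc i) (Suc j) c2
         then c1 else c2)"

end

theory Submission
  imports Defs
begin

lemma prec_Nil[simp]: "\<not> precedes [] u v"
  by (simp add: precedes_def)

lemma prec_Cons[simp]: "precedes (a#r) u v \<longleftrightarrow> (a = u \<and> v \<in> set r) \<or> precedes r u v"
proof
  assume "precedes (a#r) u v"
  then obtain i j where h: "i < j" "j < length (a#r)" "(a#r)!i = u" "(a#r)!j = v"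
    unfolding precedes_def by blast
  then obtain j' where j: "j = Suc j'" by (cases j) auto
  show "(a = u \<and> v \<in> set r) \<or> precedes r u v"
  proof (cases i)
    case 0 then show ?thesis using h j by auto
  next
    case (Suc i') then show ?thesis using h j unfolding precedes_def by auto
  qed
next
  assume "(a = u \<and> v \<in> set r) \<or> precedes r u v"
  then show "precedes (a#r) u v"
  proof
    assume "a = u \<and> v \<in> set r"
    then obtain j where "j < length r" "r!j = v" by (auto simp: in_set_conv_nth)
    then show ?thesis using \<open>a = u \<and> v \<in> set r\<close> unfolding precedes_def
      by (intro exI[of _ 0] exI[of _ "Suc j"]) auto
  next
    assume "precedes r u v"
    then obtain i j where "i < j" "j < length r" "r!i = u" "r!j = v" unfolding precedes_def by blast
    then show ?thesis unfolding precedes_def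
      by (intro exI[of _ "Suc i"] exI[of _ "Suc j"]) auto
  qed
qed

lemma prec_append: "precedes (xs@ys) u v \<longleftrightarrow> precedes xs u v \<or> precedes ys u v \<or> (u \<in> set xs \<and> v \<in> set ys)"
  by (induction xs) auto

lemma prec_set: "precedes r u v \<Longrightarrow> u \<in> set r \<and> v \<in> set r"
  by (induction r) auto

lemma snoc_shuffles_left: "zs \<in> shuffles xs ys \<Longrightarrow> zs@[x] \<in> shuffles (xs@[x]) ys"
proof (induction xs ys arbitrary: zs rule: shuffles.induct)
  case (1 ys)
  have "ys@[x] \<in> shuffles [x] ys" by (induction ys) (auto intro: Cons_in_shuffles_rightI)
  then show ?case using 1 by simp
next
  case (2 xs) then show ?case by simp
next
  case (3 x' xs y ys) then show ?case
    by (auto intro: Cons_in_shuffles_leftI Cons_in_shuffles_rightI)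
qed

lemma snoc_shuffles_right: "zs \<in> shuffles xs ys \<Longrightarrow> zs@[y] \<in> shuffles xs (ys@[y])"
  using snoc_shuffles_left[of zs ys xs y] by (simp add: shuffles_commutes)

lemma shuffles_last:
  "zs \<in> shuffles xs ys \<Longrightarrow> zs \<noteq> [] \<Longrightarrow>
   (xs \<noteq> [] \<and> last zs = last xs \<and> butlast zs \<in> shuffles (butlast xs) ys) \<or>
   (ys \<noteq> [] \<and> last zs = last ys \<and> butlast zs \<in> shuffles xs (butlast ys))"
proof (induction xs ys arbitrary: zs rule: shuffles.induct)
  case (1 ys) then show ?case by simp
next
  case (2 xs) then show ?case by simp
next
  case (3 x xs y ys)
  from "3.prems"(1) obtain z zs' where zs: "zs = z # zs'"
    and c: "(z = x \<and> zs' \<in> shuffles xs (y#ys)) \<or> (z = y \<and> zs' \<in> shuffles (x#xs) ys)" by auto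
  show ?case using c
  proof
    assume a: "z = x \<and> zs' \<in> shuffles xs (y#ys)"
    then have ne: "zs' \<noteq> []" by auto
    from "3.IH"(1)[of zs'] a ne show ?thesis unfolding zs
      by (auto intro: Cons_in_shuffles_leftI)
  next
    assume a: "z = y \<and> zs' \<in> shuffles (x#xs) ys"
    then have ne: "zs' \<noteq> []" by auto
    from "3.IH"(2)[of zs'] a ne show ?thesis unfolding zs
      by (auto intro: Cons_in_shuffles_rightI)
  qed
qed

lemma prec_shuffles: "zs \<in> shuffles xs ys \<Longrightarrow> u \<notin> set ys \<Longrightarrow> v \<notin> set ys \<Longrightarrow>
   precedes zs u v \<longleftrightarrow> precedes xs u v"
proof (induction xs ys arbitrary: zs rule: shuffles.induct)
  case (1 ys) then show ?case by (auto dest: prec_set)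
next
  case (2 xs) then show ?case by simp
next
  case (3 x xs y ys)
  from "3.prems"(1) obtain z zs' where zs: "zs = z # zs'"
    and c: "(z = x \<and> zs' \<in> shuffles xs (y#ys)) \<or> (z = y \<and> zs' \<in> shuffles (x#xs) ys)" by auto
  show ?case using c
  proof
    assume a: "z = x \<and> zs' \<in> shuffles xs (y#ys)"
    then show ?thesis using "3.IH"(1)[of zs'] "3.prems" set_shuffles[of zs' xs "y#ys"] zs by auto
  next
    assume a: "z = y \<and> zs' \<in> shuffles (x#xs) ys"
    then show ?thesis using "3.IH"(2)[of zs'] "3.prems" zs by auto
  qed
qed

lemma cnt_sum: "finite S \<Longrightarrow> finite T \<Longrightarrow>
  cnt Y S T r = (\<Sum>u\<in>S. \<Sum>v\<in>T. of_bool (Y u \<and> \<not> Y v \<and> precedes r u v))"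
proof -
  assume f: "finite S" "finite T"
  have "(\<Sum>u\<in>S. \<Sum>v\<in>T. (of_bool (Y u \<and> \<not> Y v \<and> precedes r u v)::real))
      = (\<Sum>p\<in>S \<times> T. of_bool (Y (fst p) \<and> \<not> Y (snd p) \<and> precedes r (fst p) (snd p)))"
    by (simp add: sum.cartesian_product case_prod_beta)
  also have "\<dots> = real (card ((S \<times> T) \<inter> {p. Y (fst p) \<and> \<not> Y (snd p) \<and> precedes r (fst p) (snd p)}))"
    using f by simp
  also have "(S \<times> T) \<inter> {p. Y (fst p) \<and> \<not> Y (snd p) \<and> precedes r (fst p) (snd p)}
     = {(u, v). u \<in> S \<and> Y u \<and> v \<in> T \<and> \<not> Y v \<and> precedes r u v}" by auto
  finally show ?thesis unfolding cnt_def by simp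
qed

lemma Aq_incA:
  assumes dpa: "distinct pa" and disj: "set pa \<inter> set pb = {}" and i: "i < length pa"
    and q: "set q \<subseteq> set (take i pa) \<union> set pb"
  shows "Aq Y pa pb (Suc i) j (q@[pa!i]) = Aq Y pa pb i j q
     + (\<Sum>v\<in>set pb. of_bool (Y (pa!i) \<and> \<not> Y v \<and> v \<in> set (drop j pb))) / (npos Y pa * nneg Y pb)"
proof -
  define x where "x = pa!i"
  define d where "d = drop j pb"
  have tk: "set (take (Suc i) pa) = insert x (set (take i pa))"
    using i by (simp add: take_Suc_conv_app_nth x_def)
  have xn: "x \<notin> set (take i pa)"
    using dpa i by (metis distinct_take take_Suc_conv_app_nth x_def distinct_append
        disjoint_iff_not_equal list.set_intros(1) set_append distinct.simps(2))
  have xpb: "x \<notin> set pb" using disj i x_def nth_mem by blast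
  have xq: "x \<notin> set q" using q xn xpb by auto
  have dsub: "set d \<subseteq> set pb" unfolding d_def by (rule set_drop_subset)
  have c1: "(\<Sum>v\<in>set pb. (of_bool (Y u \<and> \<not> Y v \<and> precedes ((q@[x])@d) u v)::real))
     = (\<Sum>v\<in>set pb. of_bool (Y u \<and> \<not> Y v \<and> precedes (q@d) u v))"
    if u: "u \<in> set (take i pa)" for u
  proof (rule sum.cong[OF refl])
    fix v assume v: "v \<in> set pb"
    have upb: "u \<notin> set pb" using u disj by (meson disjoint_iff in_set_takeD)
    have "u \<noteq> x" using u xn by auto
    moreover have "v \<noteq> x" using v xpb by auto
    moreover have "\<not> precedes d u v" using upb dsub prec_set by fastforce
    ultimately have "precedes ((q@[x])@d) u v \<longleftrightarrow> precedes (q@d) u v"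
      by (auto simp: prec_append)
    then show "(of_bool (Y u \<and> \<not> Y v \<and> precedes ((q@[x])@d) u v)::real)
       = of_bool (Y u \<and> \<not> Y v \<and> precedes (q@d) u v)" by simp
  qed
  have c2: "(\<Sum>v\<in>set pb. (of_bool (Y x \<and> \<not> Y v \<and> precedes ((q@[x])@d) x v)::real))
     = (\<Sum>v\<in>set pb. of_bool (Y x \<and> \<not> Y v \<and> v \<in> set d))"
  proof (rule sum.cong[OF refl])
    fix v assume v: "v \<in> set pb"
    have "\<not> precedes d x v" using xpb dsub prec_set by fastforce
    moreover have "\<not> precedes q x v" using xq prec_set by fastforce
    moreover have "v \<noteq> x" using v xpb by auto
    ultimately have "precedes ((q@[x])@d) x v \<longleftrightarrow> v \<in> set d"
      using xq by (auto simp: prec_append)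
    then show "(of_bool (Y x \<and> \<not> Y v \<and> precedes ((q@[x])@d) x v)::real)
       = of_bool (Y x \<and> \<not> Y v \<and> v \<in> set d)" by simp
  qed
  have "cnt Y (set (take (Suc i) pa)) (set pb) ((q@[x])@d)
      = cnt Y (set (take i pa)) (set pb) (q@d) + (\<Sum>v\<in>set pb. of_bool (Y x \<and> \<not> Y v \<and> v \<in> set d))"
    unfolding tk using xn c1 c2 by (simp add: cnt_sum)
  then show ?thesis unfolding Aq_def x_def[symmetric] d_def[symmetric]
    by (simp add: add_divide_distrib)
qed

lemma Bq_incA:
  assumes i: "i < length pa"
  shows "Bq Y pa pb (Suc i) j (q@[pa!i]) = Bq Y pa pb i j q"
  unfolding Bq_def using i by (simp add: Cons_nth_drop_Suc)

lemma Aq_Bq_swap: "Aq Y pa pb i j q = Bq Y pb pa j i q"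
  unfolding Aq_def Bq_def by simp

lemma Gs_incA:
  assumes "distinct pa" "set pa \<inter> set pb = {}" "i < length pa"
  shows "\<exists>c. \<forall>q. set q \<subseteq> set (take i pa) \<union> set pb \<longrightarrow>
    Gs lam Y pa pb (Suc i) j (q@[pa!i]) = Gs lam Y pa pb i j q + c"
proof -
  define D where "D = (\<Sum>v\<in>set pb. of_bool (Y (pa!i) \<and> \<not> Y v \<and> v \<in> set (drop j pb))) / (npos Y pa * nneg Y pb)"
  define kab where "kab = npos Y pa * nneg Y pb"
  define k where "k = (nneg Y pa + nneg Y pb) * (npos Y pa + npos Y pb)"
  show ?thesis
  proof (intro exI allI impI)
    fix q assume q: "set q \<subseteq> set (take i pa) \<union> set pb"
    have A: "Aq Y pa pb (Suc i) j (q@[pa!i]) = Aq Y pa pb i j q + D"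
      unfolding D_def using Aq_incA[OF assms q] .
    have B: "Bq Y pa pb (Suc i) j (q@[pa!i]) = Bq Y pa pb i j q" using Bq_incA assms(3) .
    show "Gs lam Y pa pb (Suc i) j (q@[pa!i]) = Gs lam Y pa pb i j q + (kab / k * D - lam * D)"
      unfolding Gs_def Let_def A B kab_def k_def by (simp add: algebra_simps add_divide_distrib)
  qed
qed

lemma Gs_incB:
  assumes "distinct pb" "set pa \<inter> set pb = {}" "j < length pb"
  shows "\<exists>c. \<forall>q. set q \<subseteq> set pa \<union> set (take j pb) \<longrightarrow>
    Gs lam Y pa pb i (Suc j) (q@[pb!j]) = Gs lam Y pa pb i j q + c"
proof -
  have d: "set pb \<inter> set pa = {}" using assms(2) by auto
  define D where "D = (\<Sum>v\<in>set pa. of_bool (Y (pb!j) \<and> \<not> Y v \<and> v \<in> set (drop i pa))) / (npos Y pb * nneg Y pa)"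
  define kba where "kba = nneg Y pa * npos Y pb"
  define k where "k = (nneg Y pa + nneg Y pb) * (npos Y pa + npos Y pb)"
  show ?thesis
  proof (intro exI allI impI)
    fix q assume q: "set q \<subseteq> set pa \<union> set (take j pb)"
    then have q': "set q \<subseteq> set (take j pb) \<union> set pa" by auto
    have B: "Bq Y pa pb i (Suc j) (q@[pb!j]) = Bq Y pa pb i j q + D"
      unfolding D_def Aq_Bq_swap[symmetric] using Aq_incA[OF assms(1) d assms(3) q'] .
    have A: "Aq Y pa pb i (Suc j) (q@[pb!j]) = Aq Y pa pb i j q"
      unfolding Aq_Bq_swap using Bq_incA assms(3) .
    show "Gs lam Y pa pb i (Suc j) (q@[pb!j]) = Gs lam Y pa pb i j q + (kba / k * D + lam * D)"
      unfolding Gs_def Let_def A B kba_def k_def by (simp add: algebra_simps add_divide_distrib)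
  qed
qed

lemma DP:
  assumes dpa: "distinct pa" and dpb: "distinct pb" and disj: "set pa \<inter> set pb = {}"
  shows "i \<le> length pa \<Longrightarrow> j \<le> length pb \<Longrightarrow>
    ODP lam Y pa pb i j \<in> shuffles (take i pa) (take j pb) \<and>
    (\<forall>q \<in> shuffles (take i pa) (take j pb). Gs lam Y pa pb i j q \<le> Gs lam Y pa pb i j (ODP lam Y pa pb i j))"
proof (induction i arbitrary: j)
  case 0 then show ?case by simp
next
  case (Suc i)
  note IHo = Suc.IH
  show ?case using Suc.prems
  proof (induction j)
    case 0 then show ?case by simp
  next
    case (Suc j)
    have i: "i < length pa" and j: "j < length pb" using Suc.prems by auto
    define x where "x = pa!i"
    define y where "y = pb!j"
    define c1 where "c1 = ODP lam Y pa pb i (Suc j) @ [x]"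
    define c2 where "c2 = ODP lam Y pa pb (Suc i) j @ [y]"
    define G where "G = Gs lam Y pa pb (Suc i) (Suc j)"
    have tpa: "take (Suc i) pa = take i pa @ [x]" using i by (simp add: take_Suc_conv_app_nth x_def)
    have tpb: "take (Suc j) pb = take j pb @ [y]" using j by (simp add: take_Suc_conv_app_nth y_def)
    have O: "ODP lam Y pa pb (Suc i) (Suc j) = (if G c1 > G c2 then c1 else c2)"
      by (simp add: c1_def c2_def x_def y_def G_def Let_def)
    have I1: "ODP lam Y pa pb i (Suc j) \<in> shuffles (take i pa) (take (Suc j) pb)"
      and I1': "\<forall>q \<in> shuffles (take i pa) (take (Suc j) pb). Gs lam Y pa pb i (Suc j) q
            \<le> Gs lam Y pa pb i (Suc j) (ODP lam Y pa pb i (Suc j))"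
      using IHo[of "Suc j"] Suc.prems by auto
    have I2: "ODP lam Y pa pb (Suc i) j \<in> shuffles (take (Suc i) pa) (take j pb)"
      and I2': "\<forall>q \<in> shuffles (take (Suc i) pa) (take j pb). Gs lam Y pa pb (Suc i) j q
            \<le> Gs lam Y pa pb (Suc i) j (ODP lam Y pa pb (Suc i) j)"
      using Suc.IH Suc.prems by auto
    obtain cA where cA: "\<forall>q. set q \<subseteq> set (take i pa) \<union> set pb \<longrightarrow>
        Gs lam Y pa pb (Suc i) (Suc j) (q@[x]) = Gs lam Y pa pb i (Suc j) q + cA"
      using Gs_incA[OF dpa disj i, of lam Y "Suc j"] unfolding x_def by blast
    obtain cB where cB: "\<forall>q. set q \<subseteq> set pa \<union> set (take j pb) \<longrightarrow>
        Gs lam Y pa pb (Suc i) (Suc j) (q@[y]) = Gs lam Y pa pb (Suc i) j q + cB"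
      using Gs_incB[OF dpb disj j, of lam Y "Suc i"] unfolding y_def by blast
    have sub1: "set q \<subseteq> set (take i pa) \<union> set pb" if "q \<in> shuffles (take i pa) (take (Suc j) pb)" for q
      using set_shuffles[OF that] set_take_subset[of "Suc j" pb] by auto
    have sub2: "set q \<subseteq> set pa \<union> set (take j pb)" if "q \<in> shuffles (take (Suc i) pa) (take j pb)" for q
      using set_shuffles[OF that] set_take_subset[of "Suc i" pa] by auto
    have G1: "G (q@[x]) \<le> G c1" if "q \<in> shuffles (take i pa) (take (Suc j) pb)" for q
      using cA sub1[OF that] sub1[OF I1] I1'[rule_format, OF that] unfolding G_def c1_def by auto
    have G2: "G (q@[y]) \<le> G c2" if "q \<in> shuffles (take (Suc i) pa) (take j pb)" for q
      using cB sub2[OF that] sub2[OF I2] I2'[rule_format, OF that] unfolding G_def c2_def by auto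
    have M1: "c1 \<in> shuffles (take (Suc i) pa) (take (Suc j) pb)"
      unfolding c1_def tpa by (rule snoc_shuffles_left[OF I1])
    have M2: "c2 \<in> shuffles (take (Suc i) pa) (take (Suc j) pb)"
      unfolding c2_def tpb by (rule snoc_shuffles_right[OF I2])
    have Mx: "ODP lam Y pa pb (Suc i) (Suc j) \<in> shuffles (take (Suc i) pa) (take (Suc j) pb)"
      using M1 M2 O by simp
    have Ge: "G c1 \<le> G (ODP lam Y pa pb (Suc i) (Suc j)) \<and> G c2 \<le> G (ODP lam Y pa pb (Suc i) (Suc j))"
      using O by auto
    have "G q \<le> G (ODP lam Y pa pb (Suc i) (Suc j))" if q: "q \<in> shuffles (take (Suc i) pa) (take (Suc j) pb)" for q
    proof -
      have "q \<noteq> []" using q by (auto simp: tpa)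
      from shuffles_last[OF q this] show ?thesis
      proof
        assume h: "take (Suc i) pa \<noteq> [] \<and> last q = last (take (Suc i) pa) \<and>
            butlast q \<in> shuffles (butlast (take (Suc i) pa)) (take (Suc j) pb)"
        have "q = butlast q @ [x]" using h \<open>q \<noteq> []\<close> by (metis append_butlast_last_id last_snoc tpa)
        moreover have "butlast q \<in> shuffles (take i pa) (take (Suc j) pb)" using h by (simp add: tpa)
        ultimately show ?thesis using G1[of "butlast q"] Ge by (metis order_trans)
      next
        assume h: "take (Suc j) pb \<noteq> [] \<and> last q = last (take (Suc j) pb) \<and>
            butlast q \<in> shuffles (take (Suc i) pa) (butlast (take (Suc j) pb))"
        have "q = butlast q @ [y]" using h \<open>q \<noteq> []\<close> by (metis append_butlast_last_id last_snoc tpb)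
        moreover have "butlast q \<in> shuffles (take (Suc i) pa) (take j pb)" using h by (simp add: tpb)
        ultimately show ?thesis using G2[of "butlast q"] Ge by (metis order_trans)
      qed
    qed
    then show ?case using Mx unfolding G_def by blast
  qed
qed

lemma cnt_union:
  assumes "finite A" "finite B" "A \<inter> B = {}"
  shows "cnt Y (A \<union> B) (A \<union> B) r = cnt Y A A r + cnt Y A B r + cnt Y B A r + cnt Y B B r"
  using assms by (simp del: sum_of_bool_eq add: cnt_sum sum.union_disjoint sum.distrib)

lemma cnt_shuffle:
  assumes r: "r \<in> shuffles xs ys" and d: "set xs \<inter> set ys = {}"
  shows "cnt Y (set xs) (set xs) r = cnt Y (set xs) (set xs) xs"
proof -
  have "{(u, v). u \<in> set xs \<and> Y u \<and> v \<in> set xs \<and> \<not> Y v \<and> precedes r u v}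
      = {(u, v). u \<in> set xs \<and> Y u \<and> v \<in> set xs \<and> \<not> Y v \<and> precedes xs u v}"
    using prec_shuffles[OF r] d by blast
  then show ?thesis unfolding cnt_def by simp
qed

lemma alg:
  fixes W cab cba pa' pb' na nb lam :: real
  assumes "pa' > 0" "pb' > 0" "na > 0" "nb > 0"
  shows "(W + cab + cba) / ((pa' + pb') * (na + nb)) - lam * (cab / (pa' * nb) - cba / (pb' * na))
     = W / ((pa' + pb') * (na + nb)) +
       ((pa' * nb) / ((na + nb) * (pa' + pb')) * (cab / (pa' * nb))
        + (na * pb') / ((na + nb) * (pa' + pb')) * (cba / (pb' * na))
        - lam * (cab / (pa' * nb) - cba / (pb' * na)))"
  using assms by (simp add: field_simps add_divide_distrib)

lemma J_eq:
  assumes r: "r \<in> shuffles pa pb" and disj: "set pa \<inter> set pb = {}"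
    and "npos Y pa \<ge> 1" and "nneg Y pa \<ge> 1"
    and "npos Y pb \<ge> 1" and "nneg Y pb \<ge> 1"
  shows "Jsig lam Y pa pb r = (cnt Y (set pa) (set pa) pa + cnt Y (set pb) (set pb) pb)
          / ((npos Y pa + npos Y pb) * (nneg Y pa + nneg Y pb))
        + Gs lam Y pa pb (length pa) (length pb) r"
proof -
  have r': "r \<in> shuffles pb pa" using r by (simp add: shuffles_commutes)
  have d': "set pb \<inter> set pa = {}" using disj by auto
  have U: "cnt Y (set pa \<union> set pb) (set pa \<union> set pb) r
     = (cnt Y (set pa) (set pa) pa + cnt Y (set pb) (set pb) pb) + cnt Y (set pa) (set pb) r + cnt Y (set pb) (set pa) r"
    using cnt_union[of "set pa" "set pb" Y r] disj cnt_shuffle[OF r disj] cnt_shuffle[OF r' d'] by simp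
  show ?thesis
    unfolding Jsig_def AUC_def xAUC_def Gs_def Let_def Aq_def Bq_def U
    using alg[of "npos Y pa" "npos Y pb" "nneg Y pa" "nneg Y pb"] assms(3-6) by simp
qed

theorem mainTheorem5:
  fixes lam :: real and Y :: "'x \<Rightarrow> bool" and pa pb :: "'x list"
  assumes "lam \<ge> 0"
    and "distinct pa" and "distinct pb" and "set pa \<inter> set pb = {}"
    and "npos Y pa \<ge> 1" and "nneg Y pa \<ge> 1"
    and "npos Y pb \<ge> 1" and "nneg Y pb \<ge> 1"
  shows "ODP lam Y pa pb (length pa) (length pb) \<in> shuffles pa pb
    \<and> (\<forall>r \<in> shuffles pa pb.
          Jsig lam Y pa pb r \<le> Jsig lam Y pa pb (ODP lam Y pa pb (length pa) (length pb)))"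
proof -
  have D: "ODP lam Y pa pb (length pa) (length pb) \<in> shuffles pa pb \<and>
    (\<forall>q \<in> shuffles pa pb. Gs lam Y pa pb (length pa) (length pb) q
       \<le> Gs lam Y pa pb (length pa) (length pb) (ODP lam Y pa pb (length pa) (length pb)))"
    using DP[OF assms(2-4), of "length pa" "length pb" lam Y] by simp
  show ?thesis
  proof (intro conjI ballI)
    show "ODP lam Y pa pb (length pa) (length pb) \<in> shuffles pa pb" using D by blast
  next
    fix r assume r: "r \<in> shuffles pa pb"
    show "Jsig lam Y pa pb r \<le> Jsig lam Y pa pb (ODP lam Y pa pb (length pa) (length pb))"
      using J_eq[OF r assms(4-8)] J_eq[OF conjunct1[OF D] assms(4-8)] D r by auto
  qed
qed

end
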